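(* Let $d\ge2$. Then for every $G\in C^2(\mathbb{R})$ there is a separately convex function $F:\mathbb{R}^d\to\mathbb{R}$ such that $F(t,t,\dots,t)=G(t)$ for each $t\in\mathbb{R}$.
   Context: A function $F:\mathbb{R}^d\to\mathbb{R}$ is called separately convex if it is convex on every line parallel to a coordinate axis. *)

theory Defs
  imports "HOL-Analysis.Analysis"
begin

definition separately_convex :: "(real ^ 'n \<Rightarrow> real) \<Rightarrow> bool" where
  "separately_convex F \<longleftrightarrow>
     (\<forall>x i. convex_on UNIV (\<lambda>s::real. F (\<chi> j. if j = i then s else x $ j)))"

definition C2_real :: "(real \<Rightarrow> real) \<Rightarrow> bool" where
  "C2_real G \<longleftrightarrow>
     (\<exists>G' G''. (\<forall>t. (G has_real_derivative G' t) (at t)) \<and>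
               (\<forall>t. (G' has_real_derivative G'' t) (at t)) \<and>
               continuous_on UNIV G'')"

end

theory Submission
  imports Defs
begin

lemma antider:
  fixes g :: "real \<Rightarrow> real" assumes "continuous_on UNIV g"
  shows "\<exists>Q. \<forall>x. (Q has_real_derivative g x) (at x)"
proof -
  have "\<exists>F. \<forall>x::real. -\<infinity> < ereal x \<longrightarrow> ereal x < \<infinity> \<longrightarrow> (F has_vector_derivative g x) (at x)"
    by (rule einterval_antiderivative) (use assms in \<open>auto simp: continuous_on_eq_continuous_at\<close>)
  then show ?thesis by (auto simp: has_real_derivative_iff_has_vector_derivative)
qed

lemma runmax:
  fixes h :: "real \<Rightarrow> real" assumes hc: "continuous_on UNIV h"
  defines "R \<equiv> \<lambda>t. Sup (h ` {0..t})"
  shows "continuous_on {0..} R" and "\<And>s t. 0 \<le> s \<Longrightarrow> s \<le> t \<Longrightarrow> h s \<le> R t"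
    and "\<And>s t. 0 \<le> s \<Longrightarrow> s \<le> t \<Longrightarrow> R s \<le> R t"
proof -
  have bdd: "\<And>t. bdd_above (h ` {0..t})"
    by (meson bounded_imp_bdd_above compact_imp_bounded compact_continuous_image
        continuous_on_subset[OF hc] compact_Icc subset_UNIV)
  have up: "h s \<le> R t" if "0 \<le> s" "s \<le> t" for s t
    unfolding R_def using that by (intro cSup_upper bdd) auto
  have least: "R t \<le> c" if "0 \<le> t" "\<And>s. 0 \<le> s \<Longrightarrow> s \<le> t \<Longrightarrow> h s \<le> c" for t c
    unfolding R_def using that by (intro cSup_least) auto
  show "\<And>s t. 0 \<le> s \<Longrightarrow> s \<le> t \<Longrightarrow> h s \<le> R t" by (rule up)
  show mono: "\<And>s t. 0 \<le> s \<Longrightarrow> s \<le> t \<Longrightarrow> R s \<le> R t"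
    by (rule least) (auto intro: up)
  show "continuous_on {0..} R"
    unfolding continuous_on_iff
  proof (intro ballI allI impI)
    fix t0 e :: real assume t0: "t0 \<in> {0..}" and e: "0 < e"
    have "isCont h t0" using hc by (simp add: continuous_on_eq_continuous_at)
    then obtain d where d: "d > 0" "\<And>s. dist s t0 < d \<Longrightarrow> dist (h s) (h t0) < e/3"
      using e unfolding continuous_at_eps_delta by (metis divide_pos_pos zero_less_numeral)
    show "\<exists>d>0. \<forall>t\<in>{0..}. dist t t0 < d \<longrightarrow> dist (R t) (R t0) < e"
    proof (intro exI[of _ d] conjI ballI impI d(1))
      fix t assume t: "t \<in> {0..}" and dt: "dist t t0 < d"
      show "dist (R t) (R t0) < e"
      proof (cases "t0 \<le> t")
        case True
        have "R t \<le> R t0 + e/3"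
        proof (rule least)
          fix s assume s: "0 \<le> s" "s \<le> t"
          show "h s \<le> R t0 + e/3"
          proof (cases "s \<le> t0")
            case True then show ?thesis using up[of s t0] s e by auto
          next
            case False
            then have "dist s t0 < d" using s dt True by (auto simp: dist_real_def)
            then have "\<bar>h s - h t0\<bar> < e/3" using d(2)[of s] by (simp add: dist_real_def)
            then have "h s < h t0 + e/3" by arith
            then show ?thesis using up[of t0 t0] t0 by auto
          qed
        qed (use t in auto)
        moreover have "R t0 \<le> R t" using mono t0 True by auto
        ultimately show ?thesis using e by (auto simp: dist_real_def)
      next
        case False
        have "R t0 \<le> R t + 2*e/3"
        proof (rule least)
          fix s assume s: "0 \<le> s" "s \<le> t0"
          show "h s \<le> R t + 2*e/3"
          proof (cases "s \<le> t")
            case True then show ?thesis using up[of s t] s e by auto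
          next
            case False2: False
            then have "dist s t0 < d" using s dt False by (auto simp: dist_real_def)
            then have "\<bar>h s - h t0\<bar> < e/3" using d(2)[of s] by (simp add: dist_real_def)
            then have "h s < h t0 + e/3" by arith
            moreover have "h t0 < h t + e/3" using d(2)[of t] dt abs_less_iff[of "h t - h t0" "e/3"] by (simp add: dist_real_def)
            ultimately show ?thesis using up[of t t] t by auto
          qed
        qed (use t0 in auto)
        moreover have "R t \<le> R t0" using mono t False by auto
        ultimately show ?thesis using e by (auto simp: dist_real_def)
      qed
    qed
  qed
qed

lemma two_idx:
  assumes "CARD('n::finite) \<ge> 2"
  obtains i k where "i \<noteq> (k::'n)"
proof -
  have "\<exists>i k :: 'n. i \<noteq> k"
  proof (rule ccontr)
    assume "\<not> ?thesis"
    then have "(UNIV :: 'n set) = {undefined}" by auto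
    then have "card (UNIV :: 'n set) = card {undefined::'n}" by (rule arg_cong)
    then show False using assms by simp
  qed
  then show ?thesis using that by blast
qed


theorem lemma2p1:
  fixes G :: "real \<Rightarrow> real"
  assumes "CARD('n::finite) \<ge> 2"
    and "C2_real G"
  shows "\<exists>F :: real ^ 'n \<Rightarrow> real. separately_convex F \<and> (\<forall>t. F (\<chi> j. t) = G t)"
proof -
  obtain G' G'' where dG: "\<And>t. (G has_real_derivative G' t) (at t)"
    and dG': "\<And>t. (G' has_real_derivative G'' t) (at t)" and cG'': "continuous_on UNIV G''"
    using assms(2) unfolding C2_real_def by blast
  define h where "h = (\<lambda>s. \<bar>G'' s\<bar> + \<bar>G'' (-s)\<bar>)"
  have hc: "continuous_on UNIV h" unfolding h_def
    by (intro continuous_intros continuous_on_compose2[OF cG'']) auto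
  define R where "R = (\<lambda>t. Sup (h ` {0..t}))"
  have RR1: "continuous_on {0..} R" using runmax(1)[OF hc] by (simp add: R_def)
  have RR2: "h s \<le> R t" if "0 \<le> s" "s \<le> t" for s t using runmax(2)[OF hc that] by (simp add: R_def)
  have RR3: "R s \<le> R t" if "0 \<le> s" "s \<le> t" for s t using runmax(3)[OF hc that] by (simp add: R_def)
  define \<rho> where "\<rho> = (\<lambda>t. R \<bar>t\<bar>)"
  have \<rho>c: "continuous_on UNIV \<rho>" unfolding \<rho>_def
    by (rule continuous_on_compose2[OF RR1]) (auto intro: continuous_intros)
  have \<rho>G: "\<bar>G'' t\<bar> \<le> \<rho> t" for t
  proof -
    have "h \<bar>t\<bar> \<le> \<rho> t" unfolding \<rho>_def by (rule RR2) auto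
    moreover have "\<bar>G'' t\<bar> \<le> h \<bar>t\<bar>" unfolding h_def by (cases "t \<ge> 0") auto
    ultimately show ?thesis by simp
  qed
  have \<rho>mono: "\<rho> s \<le> \<rho> t" if "\<bar>s\<bar> \<le> \<bar>t\<bar>" for s t
    unfolding \<rho>_def using that by (intro RR3) auto
  have \<rho>pos: "0 \<le> \<rho> t" for t using \<rho>G[of t] by linarith
  obtain P1 where dP1: "\<And>x. (P1 has_real_derivative \<rho> x) (at x)" using antider[OF \<rho>c] by blast
  have cP1: "continuous_on UNIV P1"
    using dP1 by (meson DERIV_isCont continuous_at_imp_continuous_on)
  obtain P where dP: "\<And>x. (P has_real_derivative P1 x) (at x)" using antider[OF cP1] by blast
  define \<Phi> where "\<Phi> = (\<lambda>a b. G ((a+b)/2) - 2 * P ((a+b)/2) + P (2*a - b) + P (2*b - a))"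
  have sym: "\<Phi> a b = \<Phi> b a" for a b unfolding \<Phi>_def by (simp add: add.commute)
  have cvx: "convex_on UNIV (\<lambda>s. \<Phi> s b)" for b
  proof -
    define f1 where "f1 = (\<lambda>s. (G' ((s+b)/2) - 2 * P1 ((s+b)/2)) / 2 + 2 * P1 (2 * s - b) - P1 (2 * b - s))"
    define f2 where "f2 = (\<lambda>s. (G'' ((s+b)/2) - 2 * \<rho> ((s+b)/2)) / 4 + 4 * \<rho> (2 * s - b) + \<rho> (2 * b - s))"
    have d1: "((\<lambda>s. \<Phi> s b) has_real_derivative f1 s) (at s)" for s
    proof -
      have a1: "((\<lambda>z. G ((z+b)/2)) has_real_derivative G' ((s+b)/2) * (1/2)) (at s)"
        by (rule DERIV_chain2[OF dG]) (auto intro!: derivative_eq_intros)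
      have a2: "((\<lambda>z. P ((z+b)/2)) has_real_derivative P1 ((s+b)/2) * (1/2)) (at s)"
        by (rule DERIV_chain2[OF dP]) (auto intro!: derivative_eq_intros)
      have a3: "((\<lambda>z. P (2 * z - b)) has_real_derivative P1 (2 * s - b) * 2) (at s)"
        by (rule DERIV_chain2[OF dP]) (auto intro!: derivative_eq_intros)
      have a4: "((\<lambda>z. P (2 * b - z)) has_real_derivative P1 (2 * b - s) * (-1)) (at s)"
        by (rule DERIV_chain2[OF dP]) (auto intro!: derivative_eq_intros)
      have "((\<lambda>s. \<Phi> s b) has_real_derivative (G' ((s+b)/2) * (1/2) - 2 * (P1 ((s+b)/2) * (1/2))
          + P1 (2 * s - b) * 2 + P1 (2 * b - s) * (-1))) (at s)"
        unfolding \<Phi>_def by (intro DERIV_add DERIV_diff DERIV_cmult a1 a2 a3 a4)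
      moreover have "G' ((s+b)/2) * (1/2) - 2 * (P1 ((s+b)/2) * (1/2))
          + P1 (2 * s - b) * 2 + P1 (2 * b - s) * (-1) = f1 s" by (simp add: f1_def field_simps)
      ultimately show ?thesis by simp
    qed
    have d2: "(f1 has_real_derivative f2 s) (at s)" for s
    proof -
      have a1: "((\<lambda>z. G' ((z+b)/2)) has_real_derivative G'' ((s+b)/2) * (1/2)) (at s)"
        by (rule DERIV_chain2[OF dG']) (auto intro!: derivative_eq_intros)
      have a2: "((\<lambda>z. P1 ((z+b)/2)) has_real_derivative \<rho> ((s+b)/2) * (1/2)) (at s)"
        by (rule DERIV_chain2[OF dP1]) (auto intro!: derivative_eq_intros)
      have a3: "((\<lambda>z. P1 (2 * z - b)) has_real_derivative \<rho> (2 * s - b) * 2) (at s)"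
        by (rule DERIV_chain2[OF dP1]) (auto intro!: derivative_eq_intros)
      have a4: "((\<lambda>z. P1 (2 * b - z)) has_real_derivative \<rho> (2 * b - s) * (-1)) (at s)"
        by (rule DERIV_chain2[OF dP1]) (auto intro!: derivative_eq_intros)
      have "((\<lambda>z. (G' ((z+b)/2) - 2 * P1 ((z+b)/2)) / 2 + 2 * P1 (2 * z - b) - P1 (2 * b - z))
          has_real_derivative ((G'' ((s+b)/2) * (1/2) - 2 * (\<rho> ((s+b)/2) * (1/2))) / 2
           + 2 * (\<rho> (2 * s - b) * 2) - \<rho> (2 * b - s) * (-1))) (at s)"
        by (intro DERIV_add DERIV_diff DERIV_cmult DERIV_cdivide a1 a2 a3 a4)
      moreover have "(G'' ((s+b)/2) * (1/2) - 2 * (\<rho> ((s+b)/2) * (1/2))) / 2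
           + 2 * (\<rho> (2 * s - b) * 2) - \<rho> (2 * b - s) * (-1) = f2 s" by (simp add: f2_def field_simps)
      ultimately show ?thesis by (simp add: f1_def)
    qed
    have f2pos: "0 \<le> f2 s" for s
    proof -
      let ?m = "(s+b)/2" and ?a = "2 * s - b" and ?c = "2 * b - s"
      have "\<bar>?m\<bar> \<le> (\<bar>?a\<bar> + \<bar>?c\<bar>)/2" using abs_triangle_ineq[of ?a ?c] by simp
      then have "\<bar>?m\<bar> \<le> \<bar>?a\<bar> \<or> \<bar>?m\<bar> \<le> \<bar>?c\<bar>" by auto
      then have "\<rho> ?m \<le> 4 * \<rho> ?a + \<rho> ?c" using \<rho>mono[of ?m ?a] \<rho>mono[of ?m ?c] \<rho>pos[of ?a] \<rho>pos[of ?c]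
        by auto
      moreover have "- \<rho> ?m \<le> G'' ?m" using \<rho>G[of ?m] by linarith
      ultimately show ?thesis unfolding f2_def using \<rho>pos[of ?m] by (simp add: field_simps)
    qed
    have mono: "f1 x \<le> f1 y" if "x \<le> y" for x y
      using that by (rule DERIV_nonneg_imp_nondecreasing) (use d2 f2pos in blast)
    show ?thesis by (rule convex_on_realI[OF _ d1 mono]) auto
  qed
  obtain i0 k0 where ik: "i0 \<noteq> (k0::'n)" using two_idx[OF assms(1)] by blast
  define F where "F = (\<lambda>x::real^'n. \<Phi> (x $ i0) (x $ k0))"
  have "separately_convex F"
    unfolding separately_convex_def
  proof (intro allI)
    fix x :: "real^'n" and i
    show "convex_on UNIV (\<lambda>s. F (\<chi> j. if j = i then s else x $ j))"
    proof (cases "i = i0")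
      case True then show ?thesis using ik cvx[of "x $ k0"] by (simp add: F_def)
    next
      case False
      show ?thesis
      proof (cases "i = k0")
        case True then show ?thesis using ik cvx[of "x $ i0"] False by (simp add: F_def sym)
      next
        case False2: False
        then show ?thesis using False by (simp add: F_def convex_on_const)
      qed
    qed
  qed
  moreover have "\<forall>t. F (\<chi> j. t) = G t" by (simp add: F_def \<Phi>_def)
  ultimately show ?thesis by blast
qed

end
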